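(* Let $E$ be a real affine space of dimension $n$ with a system of coordinates $(\ell_1,\dots,\ell_n)$, let $\alpha\in\mathbb R$ and $F=\{z\in E: z_1=\alpha\}$. (i) Let $k\in\{1,\dots,n\}$, let $A\subset F$ belong to the $\sigma$-algebra of subsets of $F$ generated by the restrictions to $F$ of $\ell_2,\dots,\ell_k$, and let $v,w\in\vec E$ satisfy $v_1=w_1=1$ and $(v_2,\dots,v_k)=(w_2,\dots,w_k)$. Then $A_v=A_w$. (ii) Let $\ell$ be an affine form on $E$ which is non-constant on $F$, let $A=F\cap\{\ell\ge 0\}$, and let $v,w\in\vec E$ satisfy $v_1=w_1=1$ and $\vec\ell(v)>\vec\ell(w)$. Then $A_v\subsetneq A_w$. (iii) With $\ell$ and $A=F\cap\{\ell\ge0\}$ as in (ii), let $(v^p)$ be a sequence in $\vec E$ with $v^p_1=1$ for all $p$ and $\vec\ell(v^p)\uparrow+\infty$. Then for every $\mu\in\mathcal M(E)$, $\lim_{p\to\infty}\mu(A_{v^p})=0$.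
   Context: $\vec E$ is the vector space associated with $E$; for an affine form $\ell$ on $E$, $\vec\ell$ is its associated linear form. A system of coordinates is a family $(\ell_1,\dots,\ell_n)$ of affine forms on $E$ such that $x\mapsto(\ell_1(x),\dots,\ell_n(x))$ is a bijection $E\to\mathbb R^n$; for $x\in E$ and $v\in\vec E$ one writes $x_i=\ell_i(x)$ and $v_i=\vec\ell_i(v)$. For $u\in\vec E$ with $u_1\neq 0$ and $A\subset F$, $A_u=\{x\in E: x_1\ge\alpha \text{ and } x-(x_1-\alpha)\frac{u}{u_1}\in A\}$ (the preimage of $A$ under the projection $F+\mathbb R_+u\to F$ along $u$, when $u_1>0$). $\mathcal M(E)$ is the set of finite non-negative Borel measures $\mu$ on $E$ such that $\mu(H)=0$ for every affine hyperplane $H$ of $E$. *)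

theory Defs
  imports "HOL-Analysis.Analysis" "HOL-Probability.Probability"
begin

text \<open>The real affine space E of dimension n is modelled by a Euclidean space 'e
(n = DIM('e)), with its canonical affine structure.\<close>

definition affine_form :: "('e::euclidean_space \<Rightarrow> real) \<Rightarrow> bool" where
  "affine_form l \<longleftrightarrow> (\<exists>f c. linear f \<and> l = (\<lambda>x. f x + c))"

definition lin_part :: "('e::euclidean_space \<Rightarrow> real) \<Rightarrow> 'e \<Rightarrow> real" where
  "lin_part l v = l v - l 0"

definition coord_system :: "(nat \<Rightarrow> 'e::euclidean_space \<Rightarrow> real) \<Rightarrow> bool" where
  "coord_system l \<longleftrightarrow> (\<forall>i\<in>{1..DIM('e)}. affine_form (l i)) \<and>
     bij_betw (\<lambda>x. \<lambda>i\<in>{1..DIM('e)}. l i x) UNIV ({1..DIM('e)} \<rightarrow>\<^sub>E (UNIV::real set))"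

definition cyl :: "('e::euclidean_space \<Rightarrow> real) \<Rightarrow> real \<Rightarrow> 'e set \<Rightarrow> 'e \<Rightarrow> 'e set" where
  "cyl l1 \<alpha> A u = {x. l1 x \<ge> \<alpha> \<and> x - ((l1 x - \<alpha>) / lin_part l1 u) *\<^sub>R u \<in> A}"

text \<open>The class M(E): finite Borel measures vanishing on affine hyperplanes
(hyperplanes = zero sets of non-constant affine forms).\<close>
definition meas_class :: "'e::euclidean_space measure set" where
  "meas_class = {\<mu>. sets \<mu> = sets borel \<and> finite_measure \<mu> \<and>
     (\<forall>l. affine_form l \<and> (\<exists>x y. l x \<noteq> l y) \<longrightarrow> emeasure \<mu> {x. l x = 0} = 0)}"

end

theory Submission
  imports Defs
begin

lemma aff_diff:
  assumes "affine_form l"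
  shows "l (x - s *\<^sub>R u) = l x - s * lin_part l u"
proof -
  obtain f c where f: "linear f" "l = (\<lambda>x. f x + c)" using assms unfolding affine_form_def by blast
  then show ?thesis by (simp add: lin_part_def linear_diff linear_cmul linear_0)
qed

lemma lin_part_diff:
  assumes "affine_form l"
  shows "lin_part l (a - b) = l a - l b"
proof -
  obtain f c where f: "linear f" "l = (\<lambda>x. f x + c)" using assms unfolding affine_form_def by blast
  then show ?thesis by (simp add: lin_part_def linear_diff linear_0)
qed

lemma aff_cont:
  assumes "affine_form l"
  shows "continuous_on UNIV l"
proof -
  obtain f c where f: "linear f" "l = (\<lambda>x. f x + c)" using assms unfolding affine_form_def by blast
  have "continuous_on UNIV f" using f(1) by (simp add: linear_continuous_on linear_conv_bounded_linear)
  then show ?thesis using f(2) by (auto intro!: continuous_intros)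
qed

lemma cyl_char:
  assumes "F = {z. L1 z = \<alpha>}" "affine_form L1" "affine_form l" "lin_part L1 v = 1"
  shows "x \<in> cyl L1 \<alpha> (F \<inter> {x. l x \<ge> 0}) v \<longleftrightarrow>
         \<alpha> \<le> L1 x \<and> 0 \<le> l x - (L1 x - \<alpha>) * lin_part l v"
  using assms by (simp add: cyl_def aff_diff)

lemma sat:
  assumes "A \<in> sigma_sets F {F \<inter> (L i -` B) | i B. i \<in> {2..k} \<and> B \<in> sets borel}"
    "y \<in> F" "y' \<in> F" "\<forall>i\<in>{2..k}. L i y = L i y'"
  shows "y \<in> A \<longleftrightarrow> y' \<in> A"
  using assms(1)
proof induction
  case (Basic a)
  then show ?case using assms(2-4) by auto
next
  case Empty
  then show ?case by simp
next
  case (Compl a)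
  then show ?case using assms(2,3) by auto
next
  case (Union a)
  then show ?case by auto
qed

theorem lemma8:
  fixes L :: "nat \<Rightarrow> 'e::euclidean_space \<Rightarrow> real" and \<alpha> :: real and F :: "'e set"
  assumes coords: "coord_system L"
    and F_def: "F = {z. L 1 z = \<alpha>}"
  shows
    "(\<forall>k\<in>{1..DIM('e)}. \<forall>A v w.
        A \<in> sigma_sets F {F \<inter> (L i -` B) | i B. i \<in> {2..k} \<and> B \<in> sets borel} \<and>
        lin_part (L 1) v = 1 \<and> lin_part (L 1) w = 1 \<and>
        (\<forall>i\<in>{2..k}. lin_part (L i) v = lin_part (L i) w)
        \<longrightarrow> cyl (L 1) \<alpha> A v = cyl (L 1) \<alpha> A w)
   \<and> (\<forall>l v w. affine_form l \<and> (\<exists>x\<in>F. \<exists>y\<in>F. l x \<noteq> l y) \<and>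
        lin_part (L 1) v = 1 \<and> lin_part (L 1) w = 1 \<and> lin_part l v > lin_part l w
        \<longrightarrow> cyl (L 1) \<alpha> (F \<inter> {x. l x \<ge> 0}) v \<subset> cyl (L 1) \<alpha> (F \<inter> {x. l x \<ge> 0}) w)
   \<and> (\<forall>l vs. affine_form l \<and> (\<exists>x\<in>F. \<exists>y\<in>F. l x \<noteq> l y) \<and>
        (\<forall>p. lin_part (L 1) (vs p) = 1) \<and> incseq (\<lambda>p. lin_part l (vs p)) \<and>
        filterlim (\<lambda>p. lin_part l (vs p)) at_top sequentially
        \<longrightarrow> (\<forall>\<mu>\<in>meas_class.
              (\<lambda>p. measure \<mu> (cyl (L 1) \<alpha> (F \<inter> {x. l x \<ge> 0}) (vs p))) \<longlonglongrightarrow> 0))"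
proof -
  have L1: "affine_form (L 1)" using coords unfolding coord_system_def
    using DIM_positive[where 'a='e] by (auto)
  have Fa: "F \<inter> {x. 0 \<le> l x} = {z. L 1 z = \<alpha>} \<inter> {x. 0 \<le> l x}" for l using F_def by simp
  have zero: "\<exists>y0\<in>F. l y0 = 0" if l: "affine_form l" and ne: "\<exists>x\<in>F. \<exists>y\<in>F. l x \<noteq> l y" for l
  proof -
    obtain x1 y1 where xy: "x1 \<in> F" "y1 \<in> F" "l x1 \<noteq> l y1" using ne by blast
    define s where "s = l x1 / (l x1 - l y1)"
    define z where "z = x1 - s *\<^sub>R (x1 - y1)"
    have "l z = l x1 - s * (l x1 - l y1)" unfolding z_def using l by (simp add: aff_diff lin_part_diff)
    also have "\<dots> = 0" using xy(3) unfolding s_def by simp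
    finally have "l z = 0" .
    moreover have "L 1 z = \<alpha>" unfolding z_def using L1 xy(1,2) F_def by (simp add: aff_diff lin_part_diff)
    ultimately show ?thesis using F_def by blast
  qed
  show ?thesis
  proof (intro conjI)
    show "\<forall>k\<in>{1..DIM('e)}. \<forall>A v w.
        A \<in> sigma_sets F {F \<inter> (L i -` B) | i B. i \<in> {2..k} \<and> B \<in> sets borel} \<and>
        lin_part (L 1) v = 1 \<and> lin_part (L 1) w = 1 \<and>
        (\<forall>i\<in>{2..k}. lin_part (L i) v = lin_part (L i) w)
        \<longrightarrow> cyl (L 1) \<alpha> A v = cyl (L 1) \<alpha> A w"
    proof (intro ballI allI impI)
      fix k A v w
      assume k: "k \<in> {1..DIM('e)}" and H: "A \<in> sigma_sets F {F \<inter> (L i -` B) | i B. i \<in> {2..k} \<and> B \<in> sets borel} \<and>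
        lin_part (L 1) v = 1 \<and> lin_part (L 1) w = 1 \<and>
        (\<forall>i\<in>{2..k}. lin_part (L i) v = lin_part (L i) w)"
      have aff: "affine_form (L i)" if "i \<in> {2..k}" for i
        using coords that k unfolding coord_system_def by auto
      show "cyl (L 1) \<alpha> A v = cyl (L 1) \<alpha> A w"
      proof (rule set_eqI)
        fix x
        let ?t = "L 1 x - \<alpha>"
        have inF: "x - ?t *\<^sub>R v \<in> F" "x - ?t *\<^sub>R w \<in> F"
          using H L1 F_def by (simp_all add: aff_diff)
        have eq: "\<forall>i\<in>{2..k}. L i (x - ?t *\<^sub>R v) = L i (x - ?t *\<^sub>R w)"
          using H aff by (simp add: aff_diff)
        have "x - ?t *\<^sub>R v \<in> A \<longleftrightarrow> x - ?t *\<^sub>R w \<in> A"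
          using sat[OF conjunct1[OF H] inF eq] .
        then show "x \<in> cyl (L 1) \<alpha> A v \<longleftrightarrow> x \<in> cyl (L 1) \<alpha> A w"
          using H by (simp add: cyl_def)
      qed
    qed
  next
    show "\<forall>l v w. affine_form l \<and> (\<exists>x\<in>F. \<exists>y\<in>F. l x \<noteq> l y) \<and>
        lin_part (L 1) v = 1 \<and> lin_part (L 1) w = 1 \<and> lin_part l v > lin_part l w
        \<longrightarrow> cyl (L 1) \<alpha> (F \<inter> {x. l x \<ge> 0}) v \<subset> cyl (L 1) \<alpha> (F \<inter> {x. l x \<ge> 0}) w"
    proof (intro allI impI)
      fix l v w
      assume H: "affine_form l \<and> (\<exists>x\<in>F. \<exists>y\<in>F. l x \<noteq> l y) \<and>
        lin_part (L 1) v = 1 \<and> lin_part (L 1) w = 1 \<and> lin_part l v > lin_part l w"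
      then have l: "affine_form l" and v: "lin_part (L 1) v = 1" and w: "lin_part (L 1) w = 1"
        and lt: "lin_part l v > lin_part l w" by auto
      note cv = cyl_char[OF F_def L1 l v] and cw = cyl_char[OF F_def L1 l w]
      have sub: "cyl (L 1) \<alpha> (F \<inter> {x. l x \<ge> 0}) v \<subseteq> cyl (L 1) \<alpha> (F \<inter> {x. l x \<ge> 0}) w"
      proof
        fix x assume "x \<in> cyl (L 1) \<alpha> (F \<inter> {x. l x \<ge> 0}) v"
        then have a: "\<alpha> \<le> L 1 x" "0 \<le> l x - (L 1 x - \<alpha>) * lin_part l v" using cv by auto
        have "(L 1 x - \<alpha>) * lin_part l w \<le> (L 1 x - \<alpha>) * lin_part l v"
          using a(1) lt by (intro mult_left_mono) auto
        then show "x \<in> cyl (L 1) \<alpha> (F \<inter> {x. l x \<ge> 0}) w" using cw a by auto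
      qed
      obtain y0 where y0: "y0 \<in> F" "l y0 = 0" using zero l H by blast
      define x where "x = y0 - (-1) *\<^sub>R w"
      have L1x: "L 1 x = \<alpha> + 1" using y0 F_def w aff_diff[OF L1, of y0 "-1" w] unfolding x_def by simp
      have lx: "l x = lin_part l w" using y0 aff_diff[OF l, of y0 "-1" w] unfolding x_def by simp
      have "x \<in> cyl (L 1) \<alpha> (F \<inter> {x. l x \<ge> 0}) w" using cw L1x lx by auto
      moreover have "x \<notin> cyl (L 1) \<alpha> (F \<inter> {x. l x \<ge> 0}) v" using cv L1x lx lt by auto
      ultimately show "cyl (L 1) \<alpha> (F \<inter> {x. l x \<ge> 0}) v \<subset> cyl (L 1) \<alpha> (F \<inter> {x. l x \<ge> 0}) w"
        using sub by blast
    qed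
  next
    show "\<forall>l vs. affine_form l \<and> (\<exists>x\<in>F. \<exists>y\<in>F. l x \<noteq> l y) \<and>
        (\<forall>p. lin_part (L 1) (vs p) = 1) \<and> incseq (\<lambda>p. lin_part l (vs p)) \<and>
        filterlim (\<lambda>p. lin_part l (vs p)) at_top sequentially
        \<longrightarrow> (\<forall>\<mu>\<in>meas_class.
              (\<lambda>p. measure \<mu> (cyl (L 1) \<alpha> (F \<inter> {x. l x \<ge> 0}) (vs p))) \<longlonglongrightarrow> 0)"
    proof (intro allI impI ballI)
      fix l vs and \<mu> :: "'e measure"
      assume H: "affine_form l \<and> (\<exists>x\<in>F. \<exists>y\<in>F. l x \<noteq> l y) \<and>
        (\<forall>p. lin_part (L 1) (vs p) = 1) \<and> incseq (\<lambda>p. lin_part l (vs p)) \<and>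
        filterlim (\<lambda>p. lin_part l (vs p)) at_top sequentially"
        and mu: "\<mu> \<in> meas_class"
      then have l: "affine_form l" and v: "\<And>p. lin_part (L 1) (vs p) = 1"
        and inc: "incseq (\<lambda>p. lin_part l (vs p))"
        and lim: "filterlim (\<lambda>p. lin_part l (vs p)) at_top sequentially" by auto
      have ms: "sets \<mu> = sets borel" and fm: "finite_measure \<mu>"
        and hyp: "\<And>g. affine_form g \<Longrightarrow> (\<exists>x y. g x \<noteq> g y) \<Longrightarrow> emeasure \<mu> {x. g x = 0} = 0"
        using mu unfolding meas_class_def by auto
      define S where "S p = {x. \<alpha> \<le> L 1 x \<and> 0 \<le> l x - (L 1 x - \<alpha>) * lin_part l (vs p)}" for p
      have SS: "cyl (L 1) \<alpha> (F \<inter> {x. l x \<ge> 0}) (vs p) = S p" for p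
        unfolding S_def using cyl_char[OF F_def L1 l v] by auto
      have cL: "continuous_on UNIV (L 1)" by (rule aff_cont[OF L1])
      have cl: "continuous_on UNIV l" by (rule aff_cont[OF l])
      have closedS: "closed (S p)" for p
      proof -
        have "S p = {x. \<alpha> \<le> L 1 x} \<inter> {x. 0 \<le> l x - (L 1 x - \<alpha>) * lin_part l (vs p)}"
          unfolding S_def by auto
        moreover have "closed {x. \<alpha> \<le> L 1 x}"
          using closed_Collect_le[OF continuous_on_const cL] by simp
        moreover have "closed {x. 0 \<le> l x - (L 1 x - \<alpha>) * lin_part l (vs p)}"
          by (intro closed_Collect_le continuous_on_const continuous_on_diff continuous_on_mult cL cl)
        ultimately show ?thesis by auto
      qed
      have Ssets: "range S \<subseteq> sets \<mu>" using closedS ms by auto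
      have dec: "decseq S"
        unfolding decseq_def
      proof (intro allI impI subsetI)
        fix m n x assume mn: "m \<le> n" and x: "x \<in> S n"
        have "(L 1 x - \<alpha>) * lin_part l (vs m) \<le> (L 1 x - \<alpha>) * lin_part l (vs n)"
          using x inc mn unfolding S_def incseq_def by (intro mult_left_mono) auto
        then show "x \<in> S m" using x unfolding S_def by auto
      qed
      have inter: "(\<Inter>p. S p) \<subseteq> {x. L 1 x - \<alpha> = 0}"
      proof
        fix x assume x: "x \<in> (\<Inter>p. S p)"
        show "x \<in> {x. L 1 x - \<alpha> = 0}"
        proof (rule ccontr)
          assume "x \<notin> {x. L 1 x - \<alpha> = 0}"
          with x have t: "L 1 x - \<alpha> > 0" unfolding S_def by auto
          have "eventually (\<lambda>p. lin_part l (vs p) > l x / (L 1 x - \<alpha>)) sequentially"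
            using lim by (simp add: filterlim_at_top_dense)
          then obtain p where "lin_part l (vs p) > l x / (L 1 x - \<alpha>)"
            using eventually_sequentially by auto
          then have "l x < (L 1 x - \<alpha>) * lin_part l (vs p)" using t
            by (simp add: divide_less_eq mult.commute)
          moreover have "x \<in> S p" using x by auto
          ultimately show False unfolding S_def by auto
        qed
      qed
      have gaff: "affine_form (\<lambda>x. L 1 x - \<alpha>)"
        using L1 unfolding affine_form_def by (metis add_diff_eq)
      have gne: "\<exists>x y. L 1 x - \<alpha> \<noteq> L 1 y - \<alpha>"
      proof -
        have "L 1 (vs 0) - L 1 0 = 1" using v[of 0] by (simp add: lin_part_def)
        then have "L 1 (vs 0) - \<alpha> \<noteq> L 1 0 - \<alpha>" by linarith
        then show ?thesis by blast
      qed
      have clz: "closed {x. L 1 x - \<alpha> = 0}"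
        by (intro closed_Collect_eq continuous_on_const continuous_on_diff cL)
      have null: "{x. L 1 x - \<alpha> = 0} \<in> null_sets \<mu>"
        using hyp[OF gaff gne] ms borel_closed[OF clz] by (intro null_setsI) auto
      have Imeas: "(\<Inter>p. S p) \<in> sets \<mu>"
        using Ssets by (intro sets.countable_INT') auto
      have "(\<Inter>p. S p) \<in> null_sets \<mu>"
        by (rule null_sets_subset[OF null Imeas inter])
      then have "measure \<mu> (\<Inter>p. S p) = 0"
        by (simp add: measure_def null_setsD1)
      moreover have "(\<lambda>p. measure \<mu> (S p)) \<longlonglongrightarrow> measure \<mu> (\<Inter>p. S p)"
        using finite_measure.finite_Lim_measure_decseq[OF fm Ssets dec] .
      ultimately show "(\<lambda>p. measure \<mu> (cyl (L 1) \<alpha> (F \<inter> {x. l x \<ge> 0}) (vs p))) \<longlonglongrightarrow> 0"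
        using SS by simp
    qed
  qed
qed

end
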